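(* Let $D$ be a euclidean polygon with a straight triangulation $\mathcal{T}$. Let $A$ be a union of $k$ disjoint straight arcs, each endpoint of which is a vertex of $\mathcal{T}$ or a point on $\partial D$, and with interiors in the interior of $D$. Then there is a realisation of $\mathcal{T}^{(k)}$ as a straight triangulation of $D$ that contains $A$ as a subcomplex.
   Context: A triangulation of a subset of euclidean space is straight if the inclusion of each simplex is an affine map. $\mathcal{T}^{(n)}$ denotes the $n$-fold iterated barycentric subdivision; a realisation of it as a straight triangulation of $D$ is a straight triangulation of $D$ subdividing $\mathcal{T}$ that is combinatorially the $n$-fold barycentric subdivision, the new vertex of each subdivided simplex being placed at some (not necessarily barycentric) point of its interior. *)

theory Defs
  imports "HOL-Analysis.Analysis"
begin

type_synonym pt = "real^2"

definition straight_triangulation :: "pt set \<Rightarrow> pt set set \<Rightarrow> bool" where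
  "straight_triangulation D K \<longleftrightarrow>
     finite K \<and>
     (\<forall>\<sigma>\<in>K. \<sigma> \<noteq> {} \<and> finite \<sigma> \<and> \<not> affine_dependent \<sigma>) \<and>
     (\<forall>\<sigma>\<in>K. \<forall>\<tau>. \<tau> \<noteq> {} \<and> \<tau> \<subseteq> \<sigma> \<longrightarrow> \<tau> \<in> K) \<and>
     (\<forall>\<sigma>\<in>K. \<forall>\<tau>\<in>K. convex hull \<sigma> \<inter> convex hull \<tau> = convex hull (\<sigma> \<inter> \<tau>)) \<and>
     \<Union> ((\<lambda>\<sigma>. convex hull \<sigma>) ` K) = D"

definition vertices :: "pt set set \<Rightarrow> pt set" where
  "vertices K = \<Union> K"

text \<open>One step of (generalised) barycentric subdivision: each simplex \<sigma> of K
  gets a new vertex b \<sigma>; the simplices of the subdivision are the images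
  of nonempty chains of simplices of K.\<close>
definition bsd_step :: "pt set set \<Rightarrow> (pt set \<Rightarrow> pt) \<Rightarrow> pt set set" where
  "bsd_step K b = {b ` C | C. C \<noteq> {} \<and> C \<subseteq> K \<and> Complete_Partial_Order.chain (\<subseteq>) C}"

text \<open>realises_bsd T n L: L is a realisation of the n-fold iterated barycentric
  subdivision of T, where in each step the new vertex of each simplex is placed
  at some point of its (relative) interior.\<close>
inductive realises_bsd :: "pt set set \<Rightarrow> nat \<Rightarrow> pt set set \<Rightarrow> bool" for T where
  base: "realises_bsd T 0 T"
| step: "realises_bsd T n L \<Longrightarrow> (\<forall>\<sigma>\<in>L. b \<sigma> \<in> rel_interior (convex hull \<sigma>))
          \<Longrightarrow> realises_bsd T (Suc n) (bsd_step L b)"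

definition is_subcomplex_set :: "pt set \<Rightarrow> pt set set \<Rightarrow> bool" where
  "is_subcomplex_set A K \<longleftrightarrow>
     (\<exists>S\<subseteq>K. (\<forall>\<sigma>\<in>S. \<forall>\<tau>. \<tau> \<noteq> {} \<and> \<tau> \<subseteq> \<sigma> \<longrightarrow> \<tau> \<in> S) \<and>
             A = \<Union> ((\<lambda>\<sigma>. convex hull \<sigma>) ` S))"

end

theory Submission
  imports Defs
begin


lemma faceF:
  fixes M M' :: "pt set"
  assumes "\<not> affine_dependent M" "M' \<subset> M"
  shows "convex hull M' \<inter> rel_interior (convex hull M) = {}"
proof -
  have "convex hull M' face_of convex hull M"
    using face_of_convex_hull_affine_independent[OF assms(1)] assms(2) by blast
  moreover have "convex hull M' \<noteq> convex hull M"
  proof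
    assume eq: "convex hull M' = convex hull M"
    obtain v where v: "v \<in> M" "v \<notin> M'" using assms(2) by blast
    then have "v extreme_point_of convex hull M"
      using extreme_point_of_convex_hull_affine_independent assms(1) by blast
    then have "v \<in> M'" using eq extreme_point_of_convex_hull by metis
    thus False using v by blast
  qed
  ultimately show ?thesis by (rule face_of_disjoint_rel_interior)
qed

lemma relint_in: "x \<in> rel_interior S \<Longrightarrow> x \<in> S"
  by (rule subsetD[OF rel_interior_subset])

lemma st_simplex:
  assumes "straight_triangulation D L" "\<sigma> \<in> L"
  shows "\<sigma> \<noteq> {}" "finite \<sigma>" "\<not> affine_dependent \<sigma>"
  using assms unfolding straight_triangulation_def by blast+

lemma st_face:
  assumes "straight_triangulation D L" "\<sigma> \<in> L" "\<tau> \<noteq> {}" "\<tau> \<subseteq> \<sigma>"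
  shows "\<tau> \<in> L"
  using assms unfolding straight_triangulation_def by blast

lemma st_int:
  assumes "straight_triangulation D L" "\<sigma> \<in> L" "\<tau> \<in> L"
  shows "convex hull \<sigma> \<inter> convex hull \<tau> = convex hull (\<sigma> \<inter> \<tau>)"
  using assms unfolding straight_triangulation_def by blast

lemma st_union:
  assumes "straight_triangulation D L"
  shows "D = (\<Union>\<sigma>\<in>L. convex hull \<sigma>)" "finite L"
  using assms unfolding straight_triangulation_def by argo+

lemma st_R:
  assumes "straight_triangulation D L" "\<sigma> \<in> L" "\<tau> \<in> L"
    "x \<in> rel_interior (convex hull \<sigma>)" "x \<in> convex hull \<tau>"
  shows "\<sigma> \<subseteq> \<tau>"
proof (rule ccontr)
  assume "\<not> \<sigma> \<subseteq> \<tau>"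
  then have ps: "\<sigma> \<inter> \<tau> \<subset> \<sigma>" by blast
  have "x \<in> convex hull \<sigma>" using assms(4) rel_interior_subset by blast
  then have "x \<in> convex hull (\<sigma> \<inter> \<tau>)" using st_int[OF assms(1-3)] assms(5) by blast
  then show False using faceF[OF st_simplex(3)[OF assms(1,2)] ps] assms(4) by blast
qed

lemma st_carrier:
  assumes "straight_triangulation D L" "\<sigma> \<in> L" "x \<in> convex hull \<sigma>"
  shows "\<exists>\<tau>. \<tau> \<subseteq> \<sigma> \<and> \<tau> \<noteq> {} \<and> \<tau> \<in> L \<and> x \<in> rel_interior (convex hull \<tau>)"
proof -
  have fin: "finite \<sigma>" and ind: "\<not> affine_dependent \<sigma>" using st_simplex[OF assms(1,2)] by auto
  obtain u where u: "\<forall>v\<in>\<sigma>. 0 \<le> u v" "sum u \<sigma> = 1" "(\<Sum>v\<in>\<sigma>. u v *\<^sub>R v) = x"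
    using assms(3) unfolding convex_hull_finite[OF fin] by blast
  define \<tau> where "\<tau> = {v\<in>\<sigma>. u v \<noteq> 0}"
  have sub: "\<tau> \<subseteq> \<sigma>" unfolding \<tau>_def by auto
  have "sum u \<sigma> = sum u \<tau>" by (rule sum.mono_neutral_right[OF fin sub]) (simp add: \<tau>_def)
  then have s1: "sum u \<tau> = 1" using u(2) by simp
  have s2: "(\<Sum>v\<in>\<tau>. u v *\<^sub>R v) = x"
  proof -
    have "(\<Sum>v\<in>\<sigma>. u v *\<^sub>R v) = (\<Sum>v\<in>\<tau>. u v *\<^sub>R v)"
      by (rule sum.mono_neutral_right[OF fin sub]) (simp add: \<tau>_def)
    then show ?thesis using u(3) by simp
  qed
  have ne: "\<tau> \<noteq> {}" using s1 by (metis sum.empty zero_neq_one)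
  have ind2: "\<not> affine_dependent \<tau>" using affine_independent_subset[OF ind sub] .
  have pos: "\<forall>v\<in>\<tau>. 0 < u v"
  proof
    fix v assume "v \<in> \<tau>"
    then have "v \<in> \<sigma>" "u v \<noteq> 0" unfolding \<tau>_def by auto
    then show "0 < u v" using u(1) by force
  qed
  have "x \<in> rel_interior (convex hull \<tau>)"
    unfolding rel_interior_convex_hull_explicit[OF ind2]
    using s1 s2 pos by (intro CollectI exI[of _ u]) simp
  moreover have "\<tau> \<in> L" using st_face[OF assms(1,2) ne sub] .
  ultimately show ?thesis using sub ne by blast
qed

lemma chain_max:
  assumes "finite C" "C \<noteq> {}" "Complete_Partial_Order.chain (\<subseteq>) C"
  shows "\<exists>M\<in>C. \<forall>\<tau>\<in>C. \<tau> \<subseteq> M"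
  using assms
proof (induction C rule: finite_ne_induct)
  case (singleton x) then show ?case by auto
next
  case (insert x F)
  have "Complete_Partial_Order.chain (\<subseteq>) F" using insert.prems chain_subset by blast
  then obtain M where M: "M \<in> F" "\<forall>\<tau>\<in>F. \<tau> \<subseteq> M" using insert.IH by blast
  have "x \<subseteq> M \<or> M \<subseteq> x" using insert.prems M(1) unfolding chain_def by blast
  then show ?case using M by blast
qed

lemma relint_prolong:
  fixes S :: "pt set"
  assumes "w \<in> rel_interior S" "z \<in> affine hull S"
  shows "\<exists>\<delta>>0. w + \<delta> *\<^sub>R (w - z) \<in> S"
proof (cases "w = z")
  case True
  have "w \<in> S" using assms(1) rel_interior_subset by blast
  then show ?thesis using True by (intro exI[of _ 1]) simp
next
  case False
  obtain e where e: "e > 0" "ball w e \<inter> affine hull S \<subseteq> S"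
    using assms(1) mem_rel_interior_ball by blast
  define \<delta> where "\<delta> = e / (2 * norm (w - z))"
  have np: "norm (w - z) > 0" using False by auto
  have dp: "\<delta> > 0" unfolding \<delta>_def using e np by auto
  have "w \<in> S" using assms(1) rel_interior_subset by blast
  then have wa: "w \<in> affine hull S" by (rule hull_inc)
  have "(1 + \<delta>) *\<^sub>R w + (- \<delta>) *\<^sub>R z \<in> affine hull S"
    using mem_affine[OF affine_affine_hull wa assms(2), of "1 + \<delta>" "- \<delta>"] by simp
  moreover have "(1 + \<delta>) *\<^sub>R w + (- \<delta>) *\<^sub>R z = w + \<delta> *\<^sub>R (w - z)" by (simp add: algebra_simps)
  moreover have "dist w (w + \<delta> *\<^sub>R (w - z)) < e"
  proof -
    have "dist w (w + \<delta> *\<^sub>R (w - z)) = \<delta> * norm (w - z)" using dp by (simp add: dist_norm)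
    also have "\<dots> = e / 2" unfolding \<delta>_def using np by auto
    finally show ?thesis using e by auto
  qed
  ultimately have "w + \<delta> *\<^sub>R (w - z) \<in> S" using e(2) by auto
  then show ?thesis using dp by blast
qed


lemma affF:
  fixes M M' :: "pt set"
  assumes ind: "\<not> affine_dependent M" and ps: "M' \<subset> M"
  shows "affine hull M' \<inter> rel_interior (convex hull M) = {}"
proof (rule ccontr)
  assume "affine hull M' \<inter> rel_interior (convex hull M) \<noteq> {}"
  then obtain z where z: "z \<in> affine hull M'" "z \<in> rel_interior (convex hull M)" by blast
  have "M' \<noteq> {}" using z(1) by auto
  then have "rel_interior (convex hull M') \<noteq> {}"
    using rel_interior_eq_empty[of "convex hull M'"] by auto
  then obtain w where w: "w \<in> rel_interior (convex hull M')" by blast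
  have wc: "w \<in> convex hull M'" using w rel_interior_subset by blast
  have wz: "w \<noteq> z" using faceF[OF ind ps] wc z(2) by blast
  have "z \<in> affine hull (convex hull M')" using z(1) by simp
  then obtain \<delta> where d: "\<delta> > 0" "w + \<delta> *\<^sub>R (w - z) \<in> convex hull M'"
    using relint_prolong[OF w] by blast
  define w' where "w' = w + \<delta> *\<^sub>R (w - z)"
  have face: "convex hull M' face_of convex hull M"
    using face_of_convex_hull_affine_independent[OF ind] ps by blast
  have zM: "z \<in> convex hull M" using z(2) rel_interior_subset by blast
  have w'M: "w' \<in> convex hull M" using d(2) hull_mono[of M' M] ps unfolding w'_def by blast
  have "w \<in> open_segment z w'"
  proof -
    have "z \<noteq> w'"
    proof
      assume "z = w'"
      then have "(1 + \<delta>) *\<^sub>R (w - z) = 0" unfolding w'_def by (simp add: algebra_simps)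
      then show False using d(1) wz by auto
    qed
    moreover have "w = (1 - 1/(1+\<delta>)) *\<^sub>R z + (1/(1+\<delta>)) *\<^sub>R w'"
    proof -
      have e1: "(1+\<delta>) *\<^sub>R w = \<delta> *\<^sub>R z + w'" unfolding w'_def by (simp add: algebra_simps)
      have "w = (1/(1+\<delta>)) *\<^sub>R ((1+\<delta>) *\<^sub>R w)" using d(1) by simp
      also have "\<dots> = (1/(1+\<delta>)) *\<^sub>R (\<delta> *\<^sub>R z + w')" using e1 by simp
      also have "\<dots> = (1 - 1/(1+\<delta>)) *\<^sub>R z + (1/(1+\<delta>)) *\<^sub>R w'"
        using d(1) by (simp add: algebra_simps field_simps)
      finally show ?thesis .
    qed
    moreover have "0 < 1/(1+\<delta>)" "1/(1+\<delta>) < 1" using d(1) by auto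
    ultimately show ?thesis unfolding in_segment by blast
  qed
  then have "z \<in> convex hull M'" using face zM w'M wc unfolding face_of_def by blast
  then show False using faceF[OF ind ps] z(2) by blast
qed

lemma ray_unique_aux:
  fixes S :: "pt set"
  assumes "convex S" "c \<in> rel_interior S" "y1 \<in> rel_frontier S" "y2 \<in> rel_frontier S"
    "x = (1 - u1) *\<^sub>R c + u1 *\<^sub>R y1" "x = (1 - u2) *\<^sub>R c + u2 *\<^sub>R y2"
    "0 < u1" "u1 < u2" "u2 < 1"
  shows False
proof -
  have e1: "u2 *\<^sub>R y2 = (u2 - u1) *\<^sub>R c + u1 *\<^sub>R y1"
  proof -
    have "(1 - u1) *\<^sub>R c + u1 *\<^sub>R y1 = (1 - u2) *\<^sub>R c + u2 *\<^sub>R y2" using assms(5,6) by simp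
    then show ?thesis by (simp add: algebra_simps)
  qed
  have "y2 = (1/u2) *\<^sub>R (u2 *\<^sub>R y2)" using assms(7,8) by simp
  also have "\<dots> = (1/u2) *\<^sub>R ((u2 - u1) *\<^sub>R c + u1 *\<^sub>R y1)" using e1 by simp
  also have "\<dots> = ((1/u2) * (u2 - u1)) *\<^sub>R c + ((1/u2)*u1) *\<^sub>R y1"
    by (simp only: scaleR_add_right scaleR_scaleR)
  also have "\<dots> = (1 - u1/u2) *\<^sub>R c + (u1/u2) *\<^sub>R y1"
  proof -
    have q1: "(1/u2) * (u2 - u1) = 1 - u1/u2" using assms(7,8) by (simp add: field_simps)
    have q2: "(1/u2) * u1 = u1/u2" by simp
    show ?thesis by (simp only: q1 q2)
  qed
  finally have y2: "y2 = (1 - u1/u2) *\<^sub>R c + (u1/u2) *\<^sub>R y1" .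
  have "c \<noteq> y1" using assms(2,3) unfolding rel_frontier_def by auto
  moreover have "0 < u1/u2" "u1/u2 < 1" using assms(7,8) by auto
  ultimately have "y2 \<in> open_segment c y1" using y2 unfolding in_segment by blast
  moreover have "y1 \<in> closure S" using assms(3) unfolding rel_frontier_def by auto
  ultimately have "y2 \<in> rel_interior S" using rel_interior_closure_convex_segment[OF assms(1,2)] by blast
  then show False using assms(4) unfolding rel_frontier_def by auto
qed

lemma ray_unique:
  fixes S :: "pt set"
  assumes "convex S" "c \<in> rel_interior S" "y1 \<in> rel_frontier S" "y2 \<in> rel_frontier S"
    "x \<in> open_segment c y1" "x \<in> open_segment c y2"
  shows "y1 = y2"
proof -
  obtain u1 where u1: "0 < u1" "u1 < 1" "x = (1 - u1) *\<^sub>R c + u1 *\<^sub>R y1" using assms(5) unfolding in_segment by blast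
  obtain u2 where u2: "0 < u2" "u2 < 1" "x = (1 - u2) *\<^sub>R c + u2 *\<^sub>R y2" using assms(6) unfolding in_segment by blast
  consider "u1 < u2" | "u2 < u1" | "u1 = u2" by linarith
  then show ?thesis
  proof cases
    case 1 then show ?thesis using ray_unique_aux[OF assms(1-4) u1(3) u2(3)] u1 u2 by blast
  next
    case 2 then show ?thesis using ray_unique_aux[OF assms(1,2,4,3) u2(3) u1(3)] u1 u2 by blast
  next
    case 3
    then have "u1 *\<^sub>R y1 = u1 *\<^sub>R y2" using u1(3) u2(3) by (metis add_left_cancel)
    then show ?thesis using u1(1) by auto
  qed
qed


abbreviation bcond :: "pt set set \<Rightarrow> (pt set \<Rightarrow> pt) \<Rightarrow> bool" where
  "bcond L b \<equiv> (\<forall>\<sigma>\<in>L. b \<sigma> \<in> rel_interior (convex hull \<sigma>))"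

abbreviation ch :: "pt set set \<Rightarrow> bool" where
  "ch C \<equiv> Complete_Partial_Order.chain (\<subseteq>) C"

lemma hull_chain:
  assumes "bcond L b" "C \<subseteq> L" "\<forall>\<tau>\<in>C. \<tau> \<subseteq> M"
  shows "convex hull (b ` C) \<subseteq> convex hull M"
proof (rule hull_minimal)
  show "b ` C \<subseteq> convex hull M"
  proof
    fix y assume "y \<in> b ` C"
    then obtain \<tau> where t: "\<tau> \<in> C" "y = b \<tau>" by blast
    then have "y \<in> convex hull \<tau>" using assms(1,2) rel_interior_subset by blast
    moreover have "convex hull \<tau> \<subseteq> convex hull M" using hull_mono assms(3) t(1) by blast
    ultimately show "y \<in> convex hull M" by blast
  qed
qed (rule convex_convex_hull)

lemma chain_rest:
  assumes "finite C" "C \<noteq> {}" "ch C" "M \<in> C" "\<forall>\<tau>\<in>C. \<tau> \<subseteq> M" "C - {M} \<noteq> {}"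
  shows "finite (C - {M})" "card (C - {M}) < card C" "ch (C - {M})"
    "\<exists>M'. M' \<in> C - {M} \<and> (\<forall>\<tau>\<in>C - {M}. \<tau> \<subseteq> M') \<and> M' \<subset> M"
proof -
  show f: "finite (C - {M})" using assms(1) by simp
  show "card (C - {M}) < card C" using assms(1,4) by (rule card_Diff1_less)
  show c: "ch (C - {M})" using chain_subset[OF assms(3), of "C - {M}"] by blast
  obtain M' where M': "M' \<in> C - {M}" "\<forall>\<tau>\<in>C - {M}. \<tau> \<subseteq> M'" using chain_max[OF f assms(6) c] by blast
  have "M' \<subset> M" using M' assms(5) by blast
  then show "\<exists>M'. M' \<in> C - {M} \<and> (\<forall>\<tau>\<in>C - {M}. \<tau> \<subseteq> M') \<and> M' \<subset> M" using M' by blast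
qed

lemma bsd_indep:
  assumes st: "straight_triangulation D L" and bc: "bcond L b"
  shows "finite C \<Longrightarrow> C \<noteq> {} \<Longrightarrow> C \<subseteq> L \<Longrightarrow> ch C \<Longrightarrow> \<not> affine_dependent (b ` C)"
proof (induction "card C" arbitrary: C rule: less_induct)
  case less
  obtain M where M: "M \<in> C" "\<forall>\<tau>\<in>C. \<tau> \<subseteq> M" using chain_max[OF less.prems(1,2,4)] by blast
  show ?case
  proof (cases "C - {M} = {}")
    case True
    then have "C = {M}" using M(1) by blast
    then show ?thesis by simp
  next
    case False
    note r = chain_rest[OF less.prems(1,2,4) M False]
    have sC': "C - {M} \<subseteq> L" using less.prems(3) by blast
    have ih: "\<not> affine_dependent (b ` (C - {M}))"
      using less.hyps[OF r(2) r(1) False sC' r(3)] .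
    obtain M' where M': "M' \<in> C - {M}" "\<forall>\<tau>\<in>C - {M}. \<tau> \<subseteq> M'" "M' \<subset> M" using r(4) by blast
    have "b ` (C - {M}) \<subseteq> convex hull M'" by (rule subset_trans[OF hull_subset hull_chain[OF bc sC' M'(2)]])
    then have "affine hull (b ` (C - {M})) \<subseteq> affine hull (convex hull M')" by (rule hull_mono)
    then have a1: "affine hull (b ` (C - {M})) \<subseteq> affine hull M'" by simp
    have HM: "M \<in> L" using M(1) less.prems(3) by blast
    have "b M \<notin> affine hull M'" using affF[OF st_simplex(3)[OF st HM] M'(3)] bc HM by blast
    then have "b M \<notin> affine hull (b ` (C - {M}))" using a1 by blast
    moreover have "b ` C = insert (b M) (b ` (C - {M}))" using M(1) by blast
    ultimately show ?thesis using affine_independent_insert[OF ih] by simp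
  qed
qed

lemma st_eqR:
  assumes "straight_triangulation D L" "\<sigma> \<in> L" "M \<in> L"
    "x \<in> rel_interior (convex hull \<sigma>)" "x \<in> rel_interior (convex hull M)"
  shows "\<sigma> = M"
proof -
  have "x \<in> convex hull \<sigma>" "x \<in> convex hull M" using assms(4,5) rel_interior_subset by auto
  then show ?thesis using st_R[OF assms(1,2,3) assms(4)] st_R[OF assms(1,3,2) assms(5)] by blast
qed

lemma bsd_K:
  assumes st: "straight_triangulation D L" and bc: "bcond L b"
    and sL: "\<sigma> \<in> L" and xs: "x \<in> rel_interior (convex hull \<sigma>)"
  shows "finite C \<Longrightarrow> C \<noteq> {} \<Longrightarrow> C \<subseteq> L \<Longrightarrow> ch C \<Longrightarrow> x \<in> convex hull (b ` C) \<Longrightarrow>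
    \<sigma> \<in> C \<and> (x = b \<sigma> \<or> (\<exists>y. y \<in> convex hull (b ` {\<tau>\<in>C. \<tau> \<subset> \<sigma>}) \<and>
        y \<in> rel_frontier (convex hull \<sigma>) \<and> x \<in> open_segment (b \<sigma>) y))"
proof (induction "card C" arbitrary: C rule: less_induct)
  case less
  obtain M where M: "M \<in> C" "\<forall>\<tau>\<in>C. \<tau> \<subseteq> M" using chain_max[OF less.prems(1,2,4)] by blast
  have HM: "M \<in> L" using M(1) less.prems(3) by blast
  have eqM: "\<sigma> = M" if "x \<in> rel_interior (convex hull M)" using st_eqR[OF st sL HM xs that] .
  have bM: "b M \<in> rel_interior (convex hull M)" using bc HM by blast
  show ?case
  proof (cases "C - {M} = {}")
    case True
    then have "C = {M}" using M(1) by blast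
    then have "x = b M" using less.prems(5) by simp
    then show ?thesis using eqM bM M(1) by blast
  next
    case False
    note r = chain_rest[OF less.prems(1,2,4) M False]
    have sC': "C - {M} \<subseteq> L" using less.prems(3) by blast
    obtain M' where M': "M' \<in> C - {M}" "\<forall>\<tau>\<in>C - {M}. \<tau> \<subseteq> M'" "M' \<subset> M" using r(4) by blast
    have ne: "b ` (C - {M}) \<noteq> {}" using False by blast
    have "b ` C = insert (b M) (b ` (C - {M}))" using M(1) by blast
    then obtain u v z where uvz: "u \<ge> 0" "v \<ge> 0" "u + v = 1" "z \<in> convex hull (b ` (C - {M}))"
        "x = u *\<^sub>R b M + v *\<^sub>R z"
      using less.prems(5) convex_hull_insert[OF ne, of "b M"] by auto
    consider "v = 0" | "u = 0" | "u > 0" "v > 0" using uvz by linarith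
    then show ?thesis
    proof cases
      case 1
      then have "x = b M" using uvz by simp
      then show ?thesis using eqM bM M(1) by blast
    next
      case 2
      then have xz: "x = z" using uvz by simp
      have "\<sigma> \<in> C - {M} \<and> (x = b \<sigma> \<or> (\<exists>y. y \<in> convex hull (b ` {\<tau>\<in>C - {M}. \<tau> \<subset> \<sigma>}) \<and>
        y \<in> rel_frontier (convex hull \<sigma>) \<and> x \<in> open_segment (b \<sigma>) y))"
        using less.hyps[OF r(2) r(1) False sC' r(3)] uvz(4) xz by blast
      moreover have "convex hull (b ` {\<tau>\<in>C - {M}. \<tau> \<subset> \<sigma>}) \<subseteq> convex hull (b ` {\<tau>\<in>C. \<tau> \<subset> \<sigma>})"
        by (rule hull_mono) blast
      ultimately show ?thesis by blast
    next
      case 3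
      have HMp: "M' \<in> L" using M'(1) less.prems(3) by blast
      have zM': "z \<in> convex hull M'" using hull_chain[OF bc sC' M'(2)] uvz(4) by blast
      have zM: "z \<in> convex hull M" using zM' hull_mono[of M' M] M'(3) by blast
      have znot: "z \<notin> rel_interior (convex hull M)"
        using faceF[OF st_simplex(3)[OF st HM] M'(3)] zM' by blast
      have bz: "b M \<noteq> z" using bM znot by blast
      have xo: "x \<in> open_segment (b M) z"
        unfolding in_segment using bz 3 uvz(3,5) by (intro conjI exI[of _ v]) auto
      have finM: "finite M" using st_simplex(2)[OF st HM] .
      have zcl: "z \<in> closure (convex hull M)" using zM closure_subset by blast
      have "x \<in> rel_interior (convex hull M)"
        using rel_interior_closure_convex_segment[OF convex_convex_hull bM zcl] xo by blast
      then have sM: "\<sigma> = M" by (rule eqM)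
      have "{\<tau>\<in>C. \<tau> \<subset> \<sigma>} = C - {M}" using M(2) sM by blast
      moreover have "z \<in> rel_frontier (convex hull M)" using zcl znot unfolding rel_frontier_def by blast
      ultimately show ?thesis using sM M(1) xo uvz(4) by auto
    qed
  qed
qed

lemma hull_fin_closed:
  fixes \<sigma> :: "pt set"
  assumes "finite \<sigma>"
  shows "closure (convex hull \<sigma>) = convex hull \<sigma>"
  by (rule closure_convex_hull[OF finite_imp_compact[OF assms]])

lemma bsd_I:
  assumes st: "straight_triangulation D L" and bc: "bcond L b"
  shows "\<sigma> \<in> L \<Longrightarrow> x \<in> rel_interior (convex hull \<sigma>) \<Longrightarrow>
    finite C1 \<Longrightarrow> C1 \<noteq> {} \<Longrightarrow> C1 \<subseteq> L \<Longrightarrow> ch C1 \<Longrightarrow>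
    finite C2 \<Longrightarrow> C2 \<noteq> {} \<Longrightarrow> C2 \<subseteq> L \<Longrightarrow> ch C2 \<Longrightarrow>
    x \<in> convex hull (b ` C1) \<Longrightarrow> x \<in> convex hull (b ` C2) \<Longrightarrow>
    x \<in> convex hull (b ` (C1 \<inter> C2))"
proof (induction "card \<sigma>" arbitrary: \<sigma> x C1 C2 rule: less_induct)
  case less
  note K1 = bsd_K[OF st bc less.prems(1,2,3,4,5,6,11)]
  note K2 = bsd_K[OF st bc less.prems(1,2,7,8,9,10,12)]
  have sC: "\<sigma> \<in> C1 \<inter> C2" using K1 K2 by blast
  show ?case
  proof (cases "x = b \<sigma>")
    case True
    then show ?thesis using sC hull_inc[of "b \<sigma>" "b ` (C1 \<inter> C2)"] by blast
  next
    case False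
    obtain y1 where y1: "y1 \<in> convex hull (b ` {\<tau>\<in>C1. \<tau> \<subset> \<sigma>})" "y1 \<in> rel_frontier (convex hull \<sigma>)"
       "x \<in> open_segment (b \<sigma>) y1" using K1 False by blast
    obtain y2 where y2: "y2 \<in> convex hull (b ` {\<tau>\<in>C2. \<tau> \<subset> \<sigma>})" "y2 \<in> rel_frontier (convex hull \<sigma>)"
       "x \<in> open_segment (b \<sigma>) y2" using K2 False by blast
    have bs: "b \<sigma> \<in> rel_interior (convex hull \<sigma>)" using bc less.prems(1) by blast
    have yy: "y1 = y2" using ray_unique[OF convex_convex_hull bs y1(2) y2(2) y1(3) y2(3)] .
    have fs: "finite \<sigma>" using st_simplex(2)[OF st less.prems(1)] .
    have yc: "y1 \<in> convex hull \<sigma>" using y1(2) hull_fin_closed[OF fs] unfolding rel_frontier_def by blast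
    obtain \<tau> where tau: "\<tau> \<subseteq> \<sigma>" "\<tau> \<noteq> {}" "\<tau> \<in> L" "y1 \<in> rel_interior (convex hull \<tau>)"
      using st_carrier[OF st less.prems(1) yc] by blast
    have "\<tau> \<noteq> \<sigma>" using tau(4) y1(2) unfolding rel_frontier_def by blast
    then have ct: "card \<tau> < card \<sigma>" using tau(1) fs by (simp add: psubset_card_mono)
    define C1' where "C1' = {\<tau>\<in>C1. \<tau> \<subset> \<sigma>}"
    define C2' where "C2' = {\<tau>\<in>C2. \<tau> \<subset> \<sigma>}"
    have p1: "finite C1'" "C1' \<subseteq> L" "ch C1'" unfolding C1'_def using less.prems(3,5,6)
      by (auto intro: chain_subset)
    have p2: "finite C2'" "C2' \<subseteq> L" "ch C2'" unfolding C2'_def using less.prems(7,9,10)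
      by (auto intro: chain_subset)
    have "y1 \<in> convex hull (b ` C1')" using y1(1) unfolding C1'_def .
    then have n1: "C1' \<noteq> {}" by auto
    have "y2 \<in> convex hull (b ` C2')" using y2(1) unfolding C2'_def .
    then have n2: "C2' \<noteq> {}" by auto
    have "y1 \<in> convex hull (b ` (C1' \<inter> C2'))"
      using less.hyps[OF ct tau(3,4) p1(1) n1 p1(2,3) p2(1) n2 p2(2,3)] y1(1) y2(1) yy
      unfolding C1'_def C2'_def by blast
    moreover have "convex hull (b ` (C1' \<inter> C2')) \<subseteq> convex hull (b ` (C1 \<inter> C2))"
      unfolding C1'_def C2'_def by (rule hull_mono) blast
    ultimately have y: "y1 \<in> convex hull (b ` (C1 \<inter> C2))" by blast
    have "b \<sigma> \<in> convex hull (b ` (C1 \<inter> C2))" using sC hull_inc[of "b \<sigma>" "b ` (C1 \<inter> C2)"] by blast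
    then have "closed_segment (b \<sigma>) y1 \<subseteq> convex hull (b ` (C1 \<inter> C2))"
      using y by (intro closed_segment_subset convex_convex_hull)
    then show ?thesis using open_closed_segment[OF y1(3)] by blast
  qed
qed

lemma bsd_cov:
  assumes st: "straight_triangulation D L" and bc: "bcond L b"
  shows "\<sigma> \<in> L \<Longrightarrow> x \<in> convex hull \<sigma> \<Longrightarrow>
    \<exists>C. C \<noteq> {} \<and> C \<subseteq> L \<and> ch C \<and> (\<forall>\<tau>\<in>C. \<tau> \<subseteq> \<sigma>) \<and> x \<in> convex hull (b ` C)"
proof (induction "card \<sigma>" arbitrary: \<sigma> x rule: less_induct)
  case less
  have fs: "finite \<sigma>" using st_simplex(2)[OF st less.prems(1)] .
  obtain \<tau> where tau: "\<tau> \<subseteq> \<sigma>" "\<tau> \<noteq> {}" "\<tau> \<in> L" "x \<in> rel_interior (convex hull \<tau>)"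
    using st_carrier[OF st less.prems] by blast
  show ?case
  proof (cases "\<tau> = \<sigma>")
    case False
    then have "\<tau> \<subset> \<sigma>" using tau(1) by blast
    then have ct: "card \<tau> < card \<sigma>" using fs by (rule psubset_card_mono[rotated])
    have "x \<in> convex hull \<tau>" using relint_in[OF tau(4)] .
    then have ex: "\<exists>C. C \<noteq> {} \<and> C \<subseteq> L \<and> ch C \<and> (\<forall>\<tau>'\<in>C. \<tau>' \<subseteq> \<tau>) \<and> x \<in> convex hull (b ` C)"
      by (rule less.hyps[OF ct tau(3)])
    obtain C where C: "C \<noteq> {} \<and> C \<subseteq> L \<and> ch C \<and> (\<forall>\<tau>'\<in>C. \<tau>' \<subseteq> \<tau>) \<and> x \<in> convex hull (b ` C)"
      using ex by (rule exE)
    have C4: "\<forall>\<tau>'\<in>C. \<tau>' \<subseteq> \<sigma>" using C tau(1) by blast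
    have "C \<noteq> {} \<and> C \<subseteq> L \<and> ch C \<and> (\<forall>\<tau>'\<in>C. \<tau>' \<subseteq> \<sigma>) \<and> x \<in> convex hull (b ` C)"
      using C C4 by simp
    then show ?thesis by (rule exI)
  next
    case True
    have bs: "b \<sigma> \<in> rel_interior (convex hull \<sigma>)" using bc less.prems(1) by blast
    show ?thesis
    proof (cases "x = b \<sigma>")
      case True
      have "ch {\<sigma>}" by (rule chain_singleton)
      moreover have "x \<in> convex hull (b ` {\<sigma>})" using True by simp
      moreover have "{\<sigma>} \<subseteq> L" using less.prems(1) by simp
      ultimately have "{\<sigma>} \<noteq> {} \<and> {\<sigma>} \<subseteq> L \<and> ch {\<sigma>} \<and> (\<forall>\<rho>\<in>{\<sigma>}. \<rho> \<subseteq> \<sigma>) \<and> x \<in> convex hull (b ` {\<sigma>})"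
        by simp
      then show ?thesis by (rule exI)
    next
      case False
      have bx: "b \<sigma> \<noteq> x" using False by simp
      obtain y where y: "y \<in> rel_frontier (convex hull \<sigma>)" "x \<in> closed_segment (b \<sigma>) y"
        using segment_to_rel_frontier_aux[OF convex_convex_hull finite_imp_bounded_convex_hull[OF fs]
          bs less.prems(2) bx] by blast
      have yc: "y \<in> convex hull \<sigma>" using y(1) hull_fin_closed[OF fs] unfolding rel_frontier_def by blast
      obtain \<tau>' where tau': "\<tau>' \<subseteq> \<sigma>" "\<tau>' \<noteq> {}" "\<tau>' \<in> L" "y \<in> rel_interior (convex hull \<tau>')"
        using st_carrier[OF st less.prems(1) yc] by blast
      have "\<tau>' \<noteq> \<sigma>" using tau'(4) y(1) unfolding rel_frontier_def by blast
      then have ct: "card \<tau>' < card \<sigma>" using tau'(1) fs by (simp add: psubset_card_mono)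
      have "y \<in> convex hull \<tau>'" using relint_in[OF tau'(4)] .
      then have ex: "\<exists>C. C \<noteq> {} \<and> C \<subseteq> L \<and> ch C \<and> (\<forall>\<rho>\<in>C. \<rho> \<subseteq> \<tau>') \<and> y \<in> convex hull (b ` C)"
        by (rule less.hyps[OF ct tau'(3)])
      obtain C where C0: "C \<noteq> {} \<and> C \<subseteq> L \<and> ch C \<and> (\<forall>\<rho>\<in>C. \<rho> \<subseteq> \<tau>') \<and> y \<in> convex hull (b ` C)"
        using ex by (rule exE)
      then have C: "C \<noteq> {}" "C \<subseteq> L" "ch C" "\<forall>\<rho>\<in>C. \<rho> \<subseteq> \<tau>'" "y \<in> convex hull (b ` C)"
        by simp_all
      define C2 where "C2 = insert \<sigma> C"
      have c2: "ch C2" unfolding C2_def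
      proof (rule chainI)
        fix p q assume pq: "p \<in> insert \<sigma> C" "q \<in> insert \<sigma> C"
        show "p \<subseteq> q \<or> q \<subseteq> p"
        proof (cases "p = \<sigma> \<or> q = \<sigma>")
          case True
          then show ?thesis using pq C(4) tau'(1) by blast
        next
          case False
          then have "p \<in> C" "q \<in> C" using pq by auto
          then show ?thesis using chainD[OF C(3)] by blast
        qed
      qed
      have s2: "\<forall>\<rho>\<in>C2. \<rho> \<subseteq> \<sigma>" unfolding C2_def using C(4) tau'(1) by blast
      have l2: "C2 \<subseteq> L" unfolding C2_def using C(2) less.prems(1) by blast
      have "convex hull (b ` C) \<subseteq> convex hull (b ` C2)" unfolding C2_def by (rule hull_mono) blast
      then have yy: "y \<in> convex hull (b ` C2)" using C(5) by blast
      have "b \<sigma> \<in> convex hull (b ` C2)" unfolding C2_def by (rule hull_inc) blast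
      then have "closed_segment (b \<sigma>) y \<subseteq> convex hull (b ` C2)"
        using yy by (intro closed_segment_subset convex_convex_hull)
      then have x2: "x \<in> convex hull (b ` C2)" using y(2) by blast
      have ne2: "C2 \<noteq> {}" unfolding C2_def by blast
      have "C2 \<noteq> {} \<and> C2 \<subseteq> L \<and> ch C2 \<and> (\<forall>\<rho>\<in>C2. \<rho> \<subseteq> \<sigma>) \<and> x \<in> convex hull (b ` C2)"
        using c2 s2 l2 x2 ne2 by simp
      then show ?thesis by (rule exI)
    qed
  qed
qed

lemma bsd_tri:
  assumes st: "straight_triangulation D L" and bc: "bcond L b"
  shows "straight_triangulation D (bsd_step L b)"
proof -
  have fL: "finite L" using st_union(2)[OF st] .
  have mem: "\<rho> \<in> bsd_step L b \<longleftrightarrow> (\<exists>C. \<rho> = b ` C \<and> C \<noteq> {} \<and> C \<subseteq> L \<and> ch C)" for \<rho>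
    unfolding bsd_step_def by blast
  have p1: "finite (bsd_step L b)"
  proof -
    have "bsd_step L b \<subseteq> (\<lambda>C. b ` C) ` Pow L" unfolding bsd_step_def by blast
    moreover have "finite ((\<lambda>C. b ` C) ` Pow L)" using fL by simp
    ultimately show ?thesis by (rule finite_subset)
  qed
  have p2: "\<forall>\<rho>\<in>bsd_step L b. \<rho> \<noteq> {} \<and> finite \<rho> \<and> \<not> affine_dependent \<rho>"
  proof
    fix \<rho> assume "\<rho> \<in> bsd_step L b"
    then obtain C where C: "\<rho> = b ` C" "C \<noteq> {}" "C \<subseteq> L" "ch C" using mem by blast
    have fC: "finite C" using C(3) fL by (rule finite_subset)
    show "\<rho> \<noteq> {} \<and> finite \<rho> \<and> \<not> affine_dependent \<rho>"
      using C fC bsd_indep[OF st bc fC C(2,3,4)] by simp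
  qed
  have p3: "\<forall>\<rho>\<in>bsd_step L b. \<forall>\<tau>. \<tau> \<noteq> {} \<and> \<tau> \<subseteq> \<rho> \<longrightarrow> \<tau> \<in> bsd_step L b"
  proof (intro ballI allI impI)
    fix \<rho> \<tau> assume r: "\<rho> \<in> bsd_step L b" and t: "\<tau> \<noteq> {} \<and> \<tau> \<subseteq> \<rho>"
    then obtain C where C: "\<rho> = b ` C" "C \<noteq> {}" "C \<subseteq> L" "ch C" using mem by blast
    define C' where "C' = {c\<in>C. b c \<in> \<tau>}"
    have "b ` C' = \<tau>" unfolding C'_def using t C(1) by blast
    moreover have "C' \<noteq> {}" using t C(1) unfolding C'_def by blast
    moreover have "C' \<subseteq> L" using C(3) unfolding C'_def by blast
    moreover have "ch C'" using chain_subset[OF C(4), of C'] unfolding C'_def by blast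
    ultimately show "\<tau> \<in> bsd_step L b" using mem by metis
  qed
  have p4: "\<forall>\<rho>1\<in>bsd_step L b. \<forall>\<rho>2\<in>bsd_step L b. convex hull \<rho>1 \<inter> convex hull \<rho>2 = convex hull (\<rho>1 \<inter> \<rho>2)"
  proof (intro ballI)
    fix \<rho>1 \<rho>2 assume r1: "\<rho>1 \<in> bsd_step L b" and r2: "\<rho>2 \<in> bsd_step L b"
    obtain C1 where C1: "\<rho>1 = b ` C1" "C1 \<noteq> {}" "C1 \<subseteq> L" "ch C1" using r1 mem by blast
    obtain C2 where C2: "\<rho>2 = b ` C2" "C2 \<noteq> {}" "C2 \<subseteq> L" "ch C2" using r2 mem by blast
    have f1: "finite C1" using C1(3) fL by (rule finite_subset)
    have f2: "finite C2" using C2(3) fL by (rule finite_subset)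
    show "convex hull \<rho>1 \<inter> convex hull \<rho>2 = convex hull (\<rho>1 \<inter> \<rho>2)"
    proof
      show "convex hull (\<rho>1 \<inter> \<rho>2) \<subseteq> convex hull \<rho>1 \<inter> convex hull \<rho>2"
        by (simp add: hull_mono)
    next
      show "convex hull \<rho>1 \<inter> convex hull \<rho>2 \<subseteq> convex hull (\<rho>1 \<inter> \<rho>2)"
      proof
        fix x assume x: "x \<in> convex hull \<rho>1 \<inter> convex hull \<rho>2"
        obtain M where M: "M \<in> C1" "\<forall>\<tau>\<in>C1. \<tau> \<subseteq> M" using chain_max[OF f1 C1(2,4)] by blast
        have HM: "M \<in> L" using M(1) C1(3) by blast
        have "x \<in> convex hull M" using hull_chain[OF bc C1(3) M(2)] x C1(1) by blast
        then obtain \<sigma> where s: "\<sigma> \<in> L" "x \<in> rel_interior (convex hull \<sigma>)"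
          using st_carrier[OF st HM] by blast
        have "x \<in> convex hull (b ` (C1 \<inter> C2))"
          using bsd_I[OF st bc s f1 C1(2,3,4) f2 C2(2,3,4)] x C1(1) C2(1) by blast
        moreover have "convex hull (b ` (C1 \<inter> C2)) \<subseteq> convex hull (\<rho>1 \<inter> \<rho>2)"
          unfolding C1(1) C2(1) by (rule hull_mono) blast
        ultimately show "x \<in> convex hull (\<rho>1 \<inter> \<rho>2)" by blast
      qed
    qed
  qed
  have p5: "(\<Union>\<rho>\<in>bsd_step L b. convex hull \<rho>) = D"
  proof
    show "(\<Union>\<rho>\<in>bsd_step L b. convex hull \<rho>) \<subseteq> D"
    proof
      fix x assume "x \<in> (\<Union>\<rho>\<in>bsd_step L b. convex hull \<rho>)"
      then obtain \<rho> where r: "\<rho> \<in> bsd_step L b" "x \<in> convex hull \<rho>" by blast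
      obtain C where C: "\<rho> = b ` C" "C \<noteq> {}" "C \<subseteq> L" "ch C" using r(1) mem by blast
      have f: "finite C" using C(3) fL by (rule finite_subset)
      obtain M where M: "M \<in> C" "\<forall>\<tau>\<in>C. \<tau> \<subseteq> M" using chain_max[OF f C(2,4)] by blast
      have "x \<in> convex hull M" using hull_chain[OF bc C(3) M(2)] r(2) C(1) by blast
      then show "x \<in> D" using st_union(1)[OF st] M(1) C(3) by blast
    qed
  next
    show "D \<subseteq> (\<Union>\<rho>\<in>bsd_step L b. convex hull \<rho>)"
    proof
      fix x assume "x \<in> D"
      then obtain \<sigma> where s: "\<sigma> \<in> L" "x \<in> convex hull \<sigma>" using st_union(1)[OF st] by blast
      obtain C where "C \<noteq> {}" "C \<subseteq> L" "ch C" "x \<in> convex hull (b ` C)"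
        using bsd_cov[OF st bc s] by blast
      then show "x \<in> (\<Union>\<rho>\<in>bsd_step L b. convex hull \<rho>)" using mem by blast
    qed
  qed
  show ?thesis unfolding straight_triangulation_def using p1 p2 p3 p4 p5 by blast
qed


lemma seg_param:
  fixes p q x :: pt
  assumes "x \<in> closed_segment p q"
  shows "\<exists>t. 0 \<le> t \<and> t \<le> 1 \<and> x = p + t *\<^sub>R (q - p)"
proof -
  obtain u where u: "0 \<le> u" "u \<le> 1" "x = (1 - u) *\<^sub>R p + u *\<^sub>R q" using assms unfolding in_segment by blast
  have "x = p + u *\<^sub>R (q - p)" using u(3) by (simp add: algebra_simps)
  then show ?thesis using u(1,2) by blast
qed

lemma P_inj:
  fixes p q :: pt
  assumes "p \<noteq> q" "p + s *\<^sub>R (q - p) = p + t *\<^sub>R (q - p)"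
  shows "s = t"
proof -
  have "s *\<^sub>R (q - p) = t *\<^sub>R (q - p)" using assms(2) by simp
  moreover have "q - p \<noteq> 0" using assms(1) by simp
  ultimately show ?thesis by (simp add: scaleR_cancel_right)
qed

lemma P_comb:
  fixes p q :: pt
  shows "(1 - v) *\<^sub>R (p + s *\<^sub>R (q - p)) + v *\<^sub>R (p + t *\<^sub>R (q - p)) = p + ((1 - v) * s + v * t) *\<^sub>R (q - p)"
  by (simp add: algebra_simps)

lemma ratio_id:
  fixes s t u :: real
  assumes "s \<noteq> t"
  shows "(1 - (u - s)/(t - s)) * s + ((u - s)/(t - s)) * t = u"
proof -
  define a where "a = (u - s)/(t - s)"
  have "t - s \<noteq> 0" using assms by simp
  then have h: "a * (t - s) = u - s" unfolding a_def by simp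
  have "(1 - a) * s + a * t = s + a * (t - s)" by (simp add: algebra_simps)
  also have "\<dots> = u" using h by simp
  finally show ?thesis unfolding a_def .
qed

lemma P_open:
  fixes p q :: pt
  assumes "p \<noteq> q" "s \<noteq> t" "0 < (u - s)/(t - s)" "(u - s)/(t - s) < 1"
  shows "p + u *\<^sub>R (q - p) \<in> open_segment (p + s *\<^sub>R (q - p)) (p + t *\<^sub>R (q - p))"
proof -
  define v where "v = (u - s)/(t - s)"
  have "p + u *\<^sub>R (q - p) = (1 - v) *\<^sub>R (p + s *\<^sub>R (q - p)) + v *\<^sub>R (p + t *\<^sub>R (q - p))"
    unfolding P_comb v_def ratio_id[OF assms(2)] ..
  moreover have "p + s *\<^sub>R (q - p) \<noteq> p + t *\<^sub>R (q - p)" using P_inj[OF assms(1)] assms(2) by blast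
  ultimately show ?thesis unfolding in_segment using assms(3,4) unfolding v_def by blast
qed

lemma P_closed:
  fixes p q :: pt
  assumes "s \<noteq> t" "0 \<le> (u - s)/(t - s)" "(u - s)/(t - s) \<le> 1"
  shows "p + u *\<^sub>R (q - p) \<in> closed_segment (p + s *\<^sub>R (q - p)) (p + t *\<^sub>R (q - p))"
proof -
  define v where "v = (u - s)/(t - s)"
  have "p + u *\<^sub>R (q - p) = (1 - v) *\<^sub>R (p + s *\<^sub>R (q - p)) + v *\<^sub>R (p + t *\<^sub>R (q - p))"
    unfolding P_comb v_def ratio_id[OF assms(1)] ..
  then show ?thesis unfolding in_segment using assms(2,3) unfolding v_def by blast
qed

lemma ratio_open:
  fixes s t u :: real
  assumes "(s < u \<and> u < t) \<or> (t < u \<and> u < s)"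
  shows "0 < (u - s)/(t - s)" "(u - s)/(t - s) < 1"
  using assms by (auto simp: divide_simps)

lemma ratio_closed:
  fixes s t u :: real
  assumes "(s \<le> u \<and> u \<le> t) \<or> (t \<le> u \<and> u \<le> s)"
  shows "0 \<le> (u - s)/(t - s)" "(u - s)/(t - s) \<le> 1"
  using assms by (auto simp: divide_simps)

lemma P_in:
  fixes p q :: pt
  assumes "0 \<le> t" "t \<le> 1"
  shows "p + t *\<^sub>R (q - p) \<in> closed_segment p q"
proof -
  have "p + t *\<^sub>R (q - p) = (1 - t) *\<^sub>R p + t *\<^sub>R q" by (simp add: algebra_simps)
  then show ?thesis unfolding in_segment using assms by blast
qed

lemma geoG:
  fixes p q c x y :: pt
  assumes pq: "p \<noteq> q" and c: "c \<in> closed_segment p q" and x: "x \<in> closed_segment p q"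
    and xy: "x \<in> closed_segment c y" and xc: "x \<noteq> c" and yn: "y \<notin> closed_segment p q"
  shows "p \<in> open_segment c y \<or> q \<in> open_segment c y"
proof -
  obtain tc where tc: "0 \<le> tc" "tc \<le> 1" "c = p + tc *\<^sub>R (q - p)" using seg_param[OF c] by blast
  obtain tx where tx: "0 \<le> tx" "tx \<le> 1" "x = p + tx *\<^sub>R (q - p)" using seg_param[OF x] by blast
  obtain m where m: "0 \<le> m" "m \<le> 1" "x = (1 - m) *\<^sub>R c + m *\<^sub>R y" using xy unfolding in_segment by blast
  have m0: "m \<noteq> 0" using m(3) xc by auto
  then have mp: "m > 0" using m(1) by simp
  define ty where "ty = (tx - (1 - m) * tc) / m"
  have mty: "m * ty = tx - (1 - m) * tc" unfolding ty_def using m0 by simp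
  have "m *\<^sub>R y = x - (1 - m) *\<^sub>R c" using m(3) by (simp add: algebra_simps)
  also have "\<dots> = m *\<^sub>R p + (tx - (1 - m) * tc) *\<^sub>R (q - p)" unfolding tx(3) tc(3) by (simp add: algebra_simps)
  also have "\<dots> = m *\<^sub>R p + (m * ty) *\<^sub>R (q - p)" by (simp only: mty)
  also have "\<dots> = m *\<^sub>R (p + ty *\<^sub>R (q - p))" by (simp add: scaleR_add_right)
  finally have yP: "y = p + ty *\<^sub>R (q - p)" using m0 by simp
  have tyout: "ty < 0 \<or> ty > 1" using yn P_in[of ty p q] yP by force
  have tcx: "tc \<noteq> tx" using xc tx(3) tc(3) by auto
  show ?thesis
  proof (cases "tc < tx")
    case True
    have h: "(1 - m) * tc \<le> (1 - m) * tx" using True m(2) by (intro mult_left_mono) auto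
    have h2: "(1 - m) * tx = tx - m * tx" by (simp add: algebra_simps)
    have "m * ty \<ge> m * tx" using mty h h2 by linarith
    then have "ty \<ge> tx" using mp by simp
    then have "ty > 1" using tyout tx(1) by linarith
    then have "q = p + 1 *\<^sub>R (q - p)" "tc \<noteq> ty" using True tx(2) by auto
    then have "q \<in> open_segment c y" using P_open[OF pq, of tc ty 1] ratio_open[of tc 1 ty] True tx(2) \<open>ty > 1\<close>
      unfolding tc(3) yP by auto
    then show ?thesis by blast
  next
    case False
    then have lt: "tx < tc" using tcx by simp
    have h: "(1 - m) * tx \<le> (1 - m) * tc" using lt m(2) by (intro mult_left_mono) auto
    have h2: "(1 - m) * tx = tx - m * tx" by (simp add: algebra_simps)
    have "m * ty \<le> m * tx" using mty h h2 by linarith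
    then have "ty \<le> tx" using mp by simp
    then have "ty < 0" using tyout tx(2) by linarith
    then have "p = p + 0 *\<^sub>R (q - p)" "tc \<noteq> ty" using lt tx(1) by auto
    then have "p \<in> open_segment c y" using P_open[OF pq, of tc ty 0] ratio_open[of tc 0 ty] lt tx(1) \<open>ty < 0\<close>
      unfolding tc(3) yP by auto
    then show ?thesis by blast
  qed
qed

lemma geoG2:
  fixes p q c y z :: pt
  assumes pq: "p \<noteq> q" and c: "c \<in> closed_segment p q" and y: "y \<in> closed_segment p q"
    and z: "z \<in> closed_segment p q" and cy: "c \<noteq> y" and zy: "z \<noteq> y"
  shows "z \<in> open_segment c y \<or> y \<in> open_segment c z \<or> c \<in> closed_segment z y"
proof -
  obtain tc where tc: "c = p + tc *\<^sub>R (q - p)" using seg_param[OF c] by blast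
  obtain ty where ty: "y = p + ty *\<^sub>R (q - p)" using seg_param[OF y] by blast
  obtain tz where tz: "z = p + tz *\<^sub>R (q - p)" using seg_param[OF z] by blast
  have d1: "tc \<noteq> ty" using cy tc ty by auto
  have d2: "tz \<noteq> ty" using zy tz ty by auto
  consider "tz = tc" | "(tc < tz \<and> tz < ty) \<or> (ty < tz \<and> tz < tc)"
    | "(tc < ty \<and> ty < tz) \<or> (tz < ty \<and> ty < tc)"
    | "(tz \<le> tc \<and> tc \<le> ty) \<or> (ty \<le> tc \<and> tc \<le> tz)"
    using d1 d2 by linarith
  then show ?thesis
  proof cases
    case 1 then have "c = z" using tc tz by simp
    then show ?thesis by simp
  next
    case 2
    have "z \<in> open_segment c y" unfolding tc ty tz
      using P_open[OF pq d1 ratio_open[OF 2]] .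
    then show ?thesis by blast
  next
    case 3
    have d3: "tc \<noteq> tz" using 3 by auto
    have "y \<in> open_segment c z" unfolding tc ty tz
      using P_open[OF pq d3 ratio_open[OF 3]] .
    then show ?thesis by blast
  next
    case 4
    have "c \<in> closed_segment z y" unfolding tc ty tz
      using P_closed[OF d2 ratio_closed[OF 4]] .
    then show ?thesis by blast
  qed
qed
definition covered :: "pt set \<Rightarrow> pt set set \<Rightarrow> bool" where
  "covered s K \<longleftrightarrow> (\<forall>x\<in>s. \<exists>\<rho>\<in>K. convex hull \<rho> \<subseteq> s \<and> x \<in> convex hull \<rho>)"

lemma st_closed:
  assumes st: "straight_triangulation D L"
  shows "closed D"
proof -
  have "closed (\<Union>\<sigma>\<in>L. convex hull \<sigma>)"
  proof (rule closed_Union)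
    show "finite ((\<lambda>\<sigma>. convex hull \<sigma>) ` L)" using st_union(2)[OF st] by simp
    show "\<forall>T\<in>(\<lambda>\<sigma>. convex hull \<sigma>) ` L. closed T"
    proof
      fix T assume "T \<in> (\<lambda>\<sigma>. convex hull \<sigma>) ` L"
      then obtain \<sigma> where s: "\<sigma> \<in> L" "T = convex hull \<sigma>" by blast
      have "compact (convex hull \<sigma>)"
        using finite_imp_compact_convex_hull[OF st_simplex(2)[OF st s(1)]] .
      then show "closed T" using s(2) compact_imp_closed by blast
    qed
  qed
  then show ?thesis using st_union(1)[OF st] by simp
qed

lemma vert_D:
  assumes st: "straight_triangulation D L"
  shows "vertices L \<subseteq> D"
proof
  fix v assume "v \<in> vertices L"
  then obtain \<tau> where t: "\<tau> \<in> L" "v \<in> \<tau>" unfolding vertices_def by blast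
  have "v \<in> convex hull \<tau>" by (rule hull_inc[OF t(2)])
  then show "v \<in> D" using st_union(1)[OF st] t(1) by blast
qed

lemma interior_spread:
  assumes st: "straight_triangulation D L" and sL: "\<sigma> \<in> L"
    and m: "m \<in> rel_interior (convex hull \<sigma>)" and mi: "m \<in> interior D"
    and c: "c \<in> convex hull \<sigma>" and l: "0 < l" "l \<le> 1"
  shows "c + l *\<^sub>R (m - c) \<in> interior D"
proof -
  obtain r1 where r1: "r1 > 0" "ball m r1 \<subseteq> D" using mi mem_interior by blast
  define F where "F = \<Union> ((\<lambda>\<tau>. convex hull \<tau>) ` {\<tau>\<in>L. m \<notin> convex hull \<tau>})"
  have fL: "finite L" using st_union(2)[OF st] .
  have "closed F" unfolding F_def
  proof (rule closed_Union)
    show "finite ((\<lambda>\<tau>. convex hull \<tau>) ` {\<tau>\<in>L. m \<notin> convex hull \<tau>})" using fL by simp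
    show "\<forall>T\<in>(\<lambda>\<tau>. convex hull \<tau>) ` {\<tau>\<in>L. m \<notin> convex hull \<tau>}. closed T"
    proof
      fix T assume "T \<in> (\<lambda>\<tau>. convex hull \<tau>) ` {\<tau>\<in>L. m \<notin> convex hull \<tau>}"
      then obtain \<tau> where t: "\<tau> \<in> L" "T = convex hull \<tau>" by blast
      have "compact (convex hull \<tau>)"
        using finite_imp_compact_convex_hull[OF st_simplex(2)[OF st t(1)]] .
      then show "closed T" using t(2) compact_imp_closed by blast
    qed
  qed
  moreover have "m \<notin> F" unfolding F_def by blast
  ultimately have "open (- F)" "m \<in> - F" by auto
  then obtain r2 where r2: "r2 > 0" "ball m r2 \<subseteq> - F"
    using open_contains_ball by blast
  define r where "r = min r1 r2"
  have rp: "r > 0" unfolding r_def using r1 r2 by simp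
  have "ball (c + l *\<^sub>R (m - c)) (l * r) \<subseteq> D"
  proof
    fix z assume z: "z \<in> ball (c + l *\<^sub>R (m - c)) (l * r)"
    define w where "w = c + (1/l) *\<^sub>R (z - c)"
    have zw: "z = (1 - l) *\<^sub>R c + l *\<^sub>R w" unfolding w_def using l by (simp add: algebra_simps)
    have "m - w = (1/l) *\<^sub>R ((c + l *\<^sub>R (m - c)) - z)" unfolding w_def using l
      by (simp add: algebra_simps)
    then have "dist m w = (1/l) * dist (c + l *\<^sub>R (m - c)) z" using l by (simp add: dist_norm)
    also have "\<dots> < (1/l) * (l * r)"
    proof (rule mult_strict_left_mono)
      show "dist (c + l *\<^sub>R (m - c)) z < l * r" using z by (simp add: mem_ball)
      show "0 < 1/l" using l by simp
    qed
    also have "\<dots> = r" using l by simp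
    finally have dw: "dist m w < r" .
    then have "w \<in> ball m r1" "w \<in> ball m r2" unfolding r_def by auto
    then have wD: "w \<in> D" and wF: "w \<notin> F" using r1 r2 by auto
    then obtain \<tau> where t: "\<tau> \<in> L" "w \<in> convex hull \<tau>" using st_union(1)[OF st] by blast
    then have "m \<in> convex hull \<tau>" using wF unfolding F_def by blast
    then have "\<sigma> \<subseteq> \<tau>" using st_R[OF st sL t(1) m] by blast
    then have "c \<in> convex hull \<tau>" using c hull_mono by blast
    then have "(1 - l) *\<^sub>R c + l *\<^sub>R w \<in> convex hull \<tau>"
      using convexD[OF convex_convex_hull _ t(2), of c "1 - l" l] l by simp
    then have "z \<in> convex hull \<tau>" using zw by simp
    then show "z \<in> D" using st_union(1)[OF st] t(1) by blast
  qed
  moreover have "l * r > 0" using rp l by simp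
  ultimately show ?thesis using mem_interior by blast
qed

lemma noBoth:
  assumes st: "straight_triangulation D L" and sL: "\<sigma> \<in> L" and pq: "p \<noteq> q"
    and int: "open_segment p q \<subseteq> interior D"
    and ep: "p \<in> vertices L \<or> p \<in> frontier D" and eq: "q \<in> vertices L \<or> q \<in> frontier D"
    and pr: "p \<in> rel_interior (convex hull \<sigma>)" and qr: "q \<in> rel_interior (convex hull \<sigma>)"
  shows False
proof -
  have vert: "\<sigma> = {v}" if vv: "v \<in> vertices L" "v \<in> rel_interior (convex hull \<sigma>)" for v
  proof -
    obtain \<tau> where t: "\<tau> \<in> L" "v \<in> \<tau>" using vv(1) unfolding vertices_def by blast
    have sv: "{v} \<in> L" using st_face[OF st t(1)] t(2) by blast
    have "v \<in> convex hull {v}" by simp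
    then have "\<sigma> \<subseteq> {v}" using st_R[OF st sL sv vv(2)] by simp
    then show ?thesis using st_simplex(1)[OF st sL] by blast
  qed
  show False
  proof (cases "p \<in> vertices L \<or> q \<in> vertices L")
    case True
    then show False
    proof
      assume "p \<in> vertices L"
      then have "\<sigma> = {p}" using vert pr by blast
      then show False using qr pq by simp
    next
      assume "q \<in> vertices L"
      then have "\<sigma> = {q}" using vert qr by blast
      then show False using pr pq by simp
    qed
  next
    case False
    then have pf: "p \<in> frontier D" using ep by blast
    define m where "m = midpoint p q"
    have mo: "m \<in> open_segment p q" unfolding m_def using pq by simp
    have mi: "m \<in> interior D" using int mo by blast
    have "closed_segment p q \<subseteq> rel_interior (convex hull \<sigma>)"
      using closed_segment_subset[OF pr qr convex_rel_interior[OF convex_convex_hull]] .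
    then have mr: "m \<in> rel_interior (convex hull \<sigma>)" using open_closed_segment[OF mo] by blast
    have "m \<in> affine hull (convex hull \<sigma>)" using hull_inc[OF relint_in[OF mr]] .
    then obtain e where e: "e > 0" "p + e *\<^sub>R (p - m) \<in> convex hull \<sigma>"
      using relint_prolong[OF pr] by blast
    define c where "c = p + e *\<^sub>R (p - m)"
    define l where "l = e / (1 + e)"
    have l: "0 < l" "l \<le> 1" unfolding l_def using e(1) by auto
    have le: "l * (1 + e) = e" unfolding l_def using e(1) by simp
    have "c + l *\<^sub>R (m - c) = p + (e - l * (1 + e)) *\<^sub>R (p - m)" unfolding c_def
      by (simp add: algebra_simps)
    also have "\<dots> = p" using le by simp
    finally have cp: "c + l *\<^sub>R (m - c) = p" .
    have "c + l *\<^sub>R (m - c) \<in> interior D"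
      using interior_spread[OF st sL mr mi _ l] e(2) unfolding c_def by blast
    then have "p \<in> interior D" using cp by simp
    then show False using pf unfolding frontier_def by blast
  qed
qed
lemma arc_step:
  assumes st: "straight_triangulation D L" and pq: "p \<noteq> q"
    and int: "open_segment p q \<subseteq> interior D"
    and ep: "p \<in> vertices L \<or> p \<in> frontier D" and eq: "q \<in> vertices L \<or> q \<in> frontier D"
  shows "\<exists>\<beta>. bcond L \<beta> \<and> covered (closed_segment p q) (bsd_step L \<beta>)"
proof -
  define s where "s = closed_segment p q"
  define \<beta> where "\<beta> \<sigma> = (if p \<in> rel_interior (convex hull \<sigma>) then p
      else if q \<in> rel_interior (convex hull \<sigma>) then q
      else if s \<inter> rel_interior (convex hull \<sigma>) \<noteq> {} then (SOME z. z \<in> s \<inter> rel_interior (convex hull \<sigma>))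
      else (SOME z. z \<in> rel_interior (convex hull \<sigma>)))" for \<sigma>
  have ps: "p \<in> s" and qs: "q \<in> s" unfolding s_def by auto
  have B1: "\<beta> \<sigma> \<in> rel_interior (convex hull \<sigma>)" if sL: "\<sigma> \<in> L" for \<sigma>
  proof -
    have "convex hull \<sigma> \<noteq> {}" using st_simplex(1)[OF st sL] by simp
    then have ne: "rel_interior (convex hull \<sigma>) \<noteq> {}"
      using rel_interior_eq_empty[OF convex_convex_hull] by blast
    consider "p \<in> rel_interior (convex hull \<sigma>)"
      | "p \<notin> rel_interior (convex hull \<sigma>)" "q \<in> rel_interior (convex hull \<sigma>)"
      | "p \<notin> rel_interior (convex hull \<sigma>)" "q \<notin> rel_interior (convex hull \<sigma>)"
        "s \<inter> rel_interior (convex hull \<sigma>) \<noteq> {}"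
      | "p \<notin> rel_interior (convex hull \<sigma>)" "q \<notin> rel_interior (convex hull \<sigma>)"
        "s \<inter> rel_interior (convex hull \<sigma>) = {}" by blast
    then show ?thesis
    proof cases
      case 1 then show ?thesis unfolding \<beta>_def by simp
    next
      case 2 then show ?thesis unfolding \<beta>_def by simp
    next
      case 3
      then have "\<exists>z. z \<in> s \<inter> rel_interior (convex hull \<sigma>)" by blast
      then have "(SOME z. z \<in> s \<inter> rel_interior (convex hull \<sigma>)) \<in> s \<inter> rel_interior (convex hull \<sigma>)"
        by (rule someI_ex)
      then show ?thesis using 3 unfolding \<beta>_def by simp
    next
      case 4
      have "\<exists>z. z \<in> rel_interior (convex hull \<sigma>)" using ne by blast
      then have "(SOME z. z \<in> rel_interior (convex hull \<sigma>)) \<in> rel_interior (convex hull \<sigma>)"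
        by (rule someI_ex)
      then show ?thesis using 4 unfolding \<beta>_def by simp
    qed
  qed
  have B2: "\<beta> \<sigma> \<in> s" if "s \<inter> rel_interior (convex hull \<sigma>) \<noteq> {}" for \<sigma>
  proof -
    consider "p \<in> rel_interior (convex hull \<sigma>)"
      | "p \<notin> rel_interior (convex hull \<sigma>)" "q \<in> rel_interior (convex hull \<sigma>)"
      | "p \<notin> rel_interior (convex hull \<sigma>)" "q \<notin> rel_interior (convex hull \<sigma>)" by blast
    then show ?thesis
    proof cases
      case 1 then show ?thesis unfolding \<beta>_def using ps by simp
    next
      case 2 then show ?thesis unfolding \<beta>_def using qs by simp
    next
      case 3
      then have "\<exists>z. z \<in> s \<inter> rel_interior (convex hull \<sigma>)" using that by blast
      then have "(SOME z. z \<in> s \<inter> rel_interior (convex hull \<sigma>)) \<in> s \<inter> rel_interior (convex hull \<sigma>)"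
        by (rule someI_ex)
      then show ?thesis using 3 that unfolding \<beta>_def by simp
    qed
  qed
  have B3: "\<beta> \<sigma> = p" if "p \<in> rel_interior (convex hull \<sigma>)" for \<sigma>
    using that unfolding \<beta>_def by simp
  have B4: "\<beta> \<sigma> = q" if "\<sigma> \<in> L" "q \<in> rel_interior (convex hull \<sigma>)" for \<sigma>
  proof -
    have "p \<notin> rel_interior (convex hull \<sigma>)"
      using noBoth[OF st that(1) pq int ep eq _ that(2)] by blast
    then show ?thesis using that(2) unfolding \<beta>_def by simp
  qed
  have pD: "p \<in> D" using ep vert_D[OF st] st_closed[OF st] unfolding frontier_def by auto
  have qD: "q \<in> D" using eq vert_D[OF st] st_closed[OF st] unfolding frontier_def by auto
  have sD: "s \<subseteq> D" unfolding s_def closed_segment_eq_open using int interior_subset pD qD by blast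
  have mem1: "\<beta> ` C \<in> bsd_step L \<beta>" if "C \<noteq> {}" "C \<subseteq> L" "ch C" for C
    unfolding bsd_step_def using that by blast
  have cov: "covered s (bsd_step L \<beta>)"
    unfolding covered_def
  proof
    fix x assume xs: "x \<in> s"
    then have "x \<in> D" using sD by blast
    then obtain \<sigma>0 where s0: "\<sigma>0 \<in> L" "x \<in> convex hull \<sigma>0" using st_union(1)[OF st] by blast
    obtain \<sigma> where sg: "\<sigma> \<subseteq> \<sigma>0" "\<sigma> \<noteq> {}" "\<sigma> \<in> L" "x \<in> rel_interior (convex hull \<sigma>)"
      using st_carrier[OF st s0] by blast
    define c where "c = \<beta> \<sigma>"
    have cR: "c \<in> rel_interior (convex hull \<sigma>)" unfolding c_def by (rule B1[OF sg(3)])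
    have cs: "c \<in> s" unfolding c_def using B2 xs sg(4) by blast
    show "\<exists>\<rho>\<in>bsd_step L \<beta>. convex hull \<rho> \<subseteq> s \<and> x \<in> convex hull \<rho>"
    proof (cases "x = c")
      case True
      have "ch {\<sigma>}" by (rule chain_singleton)
      then have "\<beta> ` {\<sigma>} \<in> bsd_step L \<beta>" using mem1[of "{\<sigma>}"] sg(3) by simp
      moreover have "convex hull (\<beta> ` {\<sigma>}) \<subseteq> s" using True xs unfolding c_def by simp
      moreover have "x \<in> convex hull (\<beta> ` {\<sigma>})" using True unfolding c_def by simp
      ultimately show ?thesis by blast
    next
      case False
      have fs: "finite \<sigma>" using st_simplex(2)[OF st sg(3)] .
      have cx: "c \<noteq> x" using False by simp
      obtain y where y: "y \<in> rel_frontier (convex hull \<sigma>)" "x \<in> closed_segment c y"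
          "open_segment c y \<subseteq> rel_interior (convex hull \<sigma>)"
        using segment_to_rel_frontier_aux[OF convex_convex_hull finite_imp_bounded_convex_hull[OF fs]
            cR relint_in[OF sg(4)] cx] by blast
      have ys: "y \<in> s"
      proof (rule ccontr)
        assume yn: "y \<notin> s"
        have "p \<in> open_segment c y \<or> q \<in> open_segment c y"
          using geoG[OF pq cs[unfolded s_def] xs[unfolded s_def] y(2) False yn[unfolded s_def]] .
        then show False
        proof
          assume po: "p \<in> open_segment c y"
          then have "p \<in> rel_interior (convex hull \<sigma>)" using y(3) by blast
          then have "c = p" using B3 unfolding c_def by simp
          then show False using po by (simp add: open_segment_def)
        next
          assume qo: "q \<in> open_segment c y"
          then have "q \<in> rel_interior (convex hull \<sigma>)" using y(3) by blast
          then have "c = q" using B4 sg(3) unfolding c_def by simp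
          then show False using qo by (simp add: open_segment_def)
        qed
      qed
      have yc: "y \<in> convex hull \<sigma>" using y(1) hull_fin_closed[OF fs] unfolding rel_frontier_def by blast
      obtain \<tau> where tg: "\<tau> \<subseteq> \<sigma>" "\<tau> \<noteq> {}" "\<tau> \<in> L" "y \<in> rel_interior (convex hull \<tau>)"
        using st_carrier[OF st sg(3) yc] by blast
      have "\<tau> \<noteq> \<sigma>" using tg(4) y(1) unfolding rel_frontier_def by blast
      then have pst: "\<tau> \<subset> \<sigma>" using tg(1) by blast
      have ind: "\<not> affine_dependent \<sigma>" using st_simplex(3)[OF st sg(3)] .
      have bt: "\<beta> \<tau> = y"
      proof (rule ccontr)
        assume ne: "\<beta> \<tau> \<noteq> y"
        define z where "z = \<beta> \<tau>"
        have zy: "z \<noteq> y" using ne unfolding z_def .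
        have zs: "z \<in> s" unfolding z_def using B2 ys tg(4) by blast
        have zt: "z \<in> convex hull \<tau>" unfolding z_def using relint_in[OF B1[OF tg(3)]] .
        have yt: "y \<in> convex hull \<tau>" using relint_in[OF tg(4)] .
        have cy: "c \<noteq> y" using cR y(1) unfolding rel_frontier_def by blast
        have face: "convex hull \<tau> face_of convex hull \<sigma>"
          using face_of_convex_hull_affine_independent[OF ind] tg(1) by blast
        have tsub: "convex hull \<tau> \<subseteq> convex hull \<sigma>" using hull_mono[OF tg(1)] .
        have cS: "c \<in> convex hull \<sigma>" using relint_in[OF cR] .
        have "c \<in> convex hull \<tau>"
          using geoG2[OF pq cs[unfolded s_def] ys[unfolded s_def] zs[unfolded s_def] cy zy]
        proof (elim disjE)
          assume "z \<in> open_segment c y"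
          then show ?thesis using face cS yc zt unfolding face_of_def by blast
        next
          assume "y \<in> open_segment c z"
          moreover have "z \<in> convex hull \<sigma>" using zt tsub by blast
          ultimately show ?thesis using face cS yt unfolding face_of_def by blast
        next
          assume "c \<in> closed_segment z y"
          then show ?thesis using closed_segment_subset[OF zt yt convex_convex_hull] by blast
        qed
        then show False using faceF[OF ind pst] cR by blast
      qed
      have ch2: "ch {\<tau>, \<sigma>}"
      proof (rule chainI)
        fix u v assume "u \<in> {\<tau>, \<sigma>}" "v \<in> {\<tau>, \<sigma>}"
        then show "u \<subseteq> v \<or> v \<subseteq> u" using tg(1) by blast
      qed
      have "\<beta> ` {\<tau>, \<sigma>} \<in> bsd_step L \<beta>" using mem1[of "{\<tau>, \<sigma>}"] tg(3) sg(3) ch2 by simp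
      moreover have "\<beta> ` {\<tau>, \<sigma>} = {y, c}" using bt unfolding c_def by simp
      moreover have "convex hull {y, c} = closed_segment y c" by (simp add: segment_convex_hull)
      moreover have "closed_segment y c \<subseteq> s"
        using closed_segment_subset[OF ys cs] unfolding s_def by simp
      moreover have "x \<in> closed_segment y c" using y(2) closed_segment_commute by blast
      ultimately show ?thesis by metis
    qed
  qed
  show ?thesis using cov B1 unfolding s_def by blast
qed

lemma covered_mono:
  assumes st: "straight_triangulation D L" and bc: "bcond L \<beta>" and cv: "covered s L"
  shows "covered s (bsd_step L \<beta>)"
  unfolding covered_def
proof
  fix x assume "x \<in> s"
  then obtain \<rho> where r: "\<rho> \<in> L" "convex hull \<rho> \<subseteq> s" "x \<in> convex hull \<rho>"
    using cv unfolding covered_def by blast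
  obtain C where C: "C \<noteq> {}" "C \<subseteq> L" "ch C" "\<forall>\<tau>\<in>C. \<tau> \<subseteq> \<rho>" "x \<in> convex hull (\<beta> ` C)"
    using bsd_cov[OF st bc r(1,3)] by blast
  have "\<beta> ` C \<in> bsd_step L \<beta>" unfolding bsd_step_def using C(1,2,3) by blast
  moreover have "convex hull (\<beta> ` C) \<subseteq> s" using hull_chain[OF bc C(2,4)] r(2) by blast
  ultimately show "\<exists>\<rho>\<in>bsd_step L \<beta>. convex hull \<rho> \<subseteq> s \<and> x \<in> convex hull \<rho>" using C(5) by blast
qed

lemma vert_mono:
  assumes st: "straight_triangulation D L" and bc: "bcond L \<beta>"
  shows "vertices L \<subseteq> vertices (bsd_step L \<beta>)"
proof
  fix v assume "v \<in> vertices L"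
  then obtain \<tau> where t: "\<tau> \<in> L" "v \<in> \<tau>" unfolding vertices_def by blast
  have sv: "{v} \<in> L" using st_face[OF st t(1)] t(2) by blast
  have "\<beta> {v} \<in> rel_interior (convex hull {v})" using bc sv by blast
  then have bv: "\<beta> {v} = v" by simp
  have "ch {{v}}" by (rule chain_singleton)
  then have "\<beta> ` {{v}} \<in> bsd_step L \<beta>" unfolding bsd_step_def using sv by blast
  then have "{v} \<in> bsd_step L \<beta>" using bv by simp
  then show "v \<in> vertices (bsd_step L \<beta>)" unfolding vertices_def by blast
qed
theorem mainTheorem20:
  fixes D :: "pt set" and T :: "pt set set" and k :: nat and a b :: "nat \<Rightarrow> pt"
  assumes polygon: "D homeomorphic cball (0::pt) 1"
    and tri: "straight_triangulation D T"
    and arcs: "\<forall>i<k. a i \<noteq> b i"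
    and disj: "\<forall>i<k. \<forall>j<k. i \<noteq> j \<longrightarrow> closed_segment (a i) (b i) \<inter> closed_segment (a j) (b j) = {}"
    and ends: "\<forall>i<k. \<forall>p\<in>{a i, b i}. p \<in> vertices T \<or> p \<in> frontier D"
    and inter: "\<forall>i<k. open_segment (a i) (b i) \<subseteq> interior D"
  shows "\<exists>L. realises_bsd T k L \<and> straight_triangulation D L \<and>
           is_subcomplex_set (\<Union>i<k. closed_segment (a i) (b i)) L"
proof -
  have main: "\<exists>L. realises_bsd T n L \<and> straight_triangulation D L \<and> vertices T \<subseteq> vertices L \<and>
      (\<forall>i<n. covered (closed_segment (a i) (b i)) L)" if "n \<le> k" for n
    using that
  proof (induction n)
    case 0
    show ?case using realises_bsd.base tri by blast
  next
    case (Suc n)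
    then obtain L where L: "realises_bsd T n L" "straight_triangulation D L" "vertices T \<subseteq> vertices L"
      "\<forall>i<n. covered (closed_segment (a i) (b i)) L" by auto
    have nk: "n < k" using Suc.prems by simp
    have e1: "a n \<in> vertices L \<or> a n \<in> frontier D" using ends nk L(3) by blast
    have e2: "b n \<in> vertices L \<or> b n \<in> frontier D" using ends nk L(3) by blast
    obtain \<beta> where bt: "bcond L \<beta>" "covered (closed_segment (a n) (b n)) (bsd_step L \<beta>)"
      using arc_step[OF L(2) _ _ e1 e2] arcs inter nk by blast
    have r: "realises_bsd T (Suc n) (bsd_step L \<beta>)" using realises_bsd.step[OF L(1) bt(1)] .
    have s: "straight_triangulation D (bsd_step L \<beta>)" using bsd_tri[OF L(2) bt(1)] .
    have v: "vertices T \<subseteq> vertices (bsd_step L \<beta>)" using vert_mono[OF L(2) bt(1)] L(3) by blast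
    have c: "\<forall>i<Suc n. covered (closed_segment (a i) (b i)) (bsd_step L \<beta>)"
    proof (intro allI impI)
      fix i assume "i < Suc n"
      then consider "i < n" | "i = n" by linarith
      then show "covered (closed_segment (a i) (b i)) (bsd_step L \<beta>)"
      proof cases
        case 1 then show ?thesis using covered_mono[OF L(2) bt(1)] L(4) by blast
      next
        case 2 then show ?thesis using bt(2) by simp
      qed
    qed
    show ?case using r s v c by blast
  qed
  obtain L where L: "realises_bsd T k L" "straight_triangulation D L"
      "\<forall>i<k. covered (closed_segment (a i) (b i)) L" using main[of k] by blast
  define S where "S = {\<rho>\<in>L. \<exists>i<k. convex hull \<rho> \<subseteq> closed_segment (a i) (b i)}"
  have "S \<subseteq> L" unfolding S_def by blast
  moreover have "\<forall>\<sigma>\<in>S. \<forall>\<tau>. \<tau> \<noteq> {} \<and> \<tau> \<subseteq> \<sigma> \<longrightarrow> \<tau> \<in> S"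
  proof (intro ballI allI impI)
    fix \<sigma> \<tau> assume sS: "\<sigma> \<in> S" and t: "\<tau> \<noteq> {} \<and> \<tau> \<subseteq> \<sigma>"
    then obtain i where i: "\<sigma> \<in> L" "i < k" "convex hull \<sigma> \<subseteq> closed_segment (a i) (b i)"
      unfolding S_def by blast
    have "\<tau> \<in> L" using st_face[OF L(2) i(1)] t by blast
    moreover have "convex hull \<tau> \<subseteq> convex hull \<sigma>" using hull_mono t by blast
    ultimately show "\<tau> \<in> S" unfolding S_def using i by blast
  qed
  moreover have "(\<Union>i<k. closed_segment (a i) (b i)) = \<Union> ((\<lambda>\<sigma>. convex hull \<sigma>) ` S)"
  proof
    show "(\<Union>i<k. closed_segment (a i) (b i)) \<subseteq> \<Union> ((\<lambda>\<sigma>. convex hull \<sigma>) ` S)"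
    proof
      fix x assume "x \<in> (\<Union>i<k. closed_segment (a i) (b i))"
      then obtain i where i: "i < k" "x \<in> closed_segment (a i) (b i)" by blast
      then obtain \<rho> where "\<rho> \<in> L" "convex hull \<rho> \<subseteq> closed_segment (a i) (b i)" "x \<in> convex hull \<rho>"
        using L(3) unfolding covered_def by blast
      then show "x \<in> \<Union> ((\<lambda>\<sigma>. convex hull \<sigma>) ` S)" unfolding S_def using i(1) by blast
    qed
  next
    show "\<Union> ((\<lambda>\<sigma>. convex hull \<sigma>) ` S) \<subseteq> (\<Union>i<k. closed_segment (a i) (b i))"
      unfolding S_def by blast
  qed
  ultimately have "is_subcomplex_set (\<Union>i<k. closed_segment (a i) (b i)) L"
    unfolding is_subcomplex_set_def by blast
  then show ?thesis using L(1,2) by blast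
qed

end
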